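(* Let $d,d'\ge1$, $t_f>0$, let $A:\mathbb{R}^d\to\mathcal{S}^{d'}_{++}$ be $C^3$ with $A(r)\succeq C^{-1}I$ for all $r$, and for each $\varepsilon>0$ let $r_\varepsilon:[0,t_f]\to\mathbb{R}^d$ be a $C^3$ function (the atomic trajectory of the XLMD system described in the context) with $|r_\varepsilon|,|\dot r_\varepsilon|,|\ddot r_\varepsilon|\le C$ on $[0,t_f]$, $C$ independent of $\varepsilon$. For $s\in[0,t_f]$ and $\eta_0,\xi_0\in\mathbb{R}^{d'}$ consider the homogeneous system $$\varepsilon\ddot{\tilde y}_\varepsilon(t)=-A(r_\varepsilon(t))\tilde y_\varepsilon(t),\qquad \tilde y_\varepsilon(s)=\eta_0,\ \dot{\tilde y}_\varepsilon(s)=\xi_0,$$ and its flow map $\Phi^{s,t}_\varepsilon(\eta_0,\xi_0)=(\tilde y_\varepsilon(t),\dot{\tilde y}_\varepsilon(t))$ for $t\ge s$. Let $K_\varepsilon(t)=A(r_\varepsilon(t))^{1/2}$ and let $U^s_{\varepsilon,\pm}(t)$ solve $\dot U^s_{\varepsilon,\pm}(t)=\pm\imath\varepsilon^{-1/2}K_\varepsilon(t)U^s_{\varepsilon,\pm}(t)$, $U^s_{\varepsilon,\pm}(s)=I_{d'}$. Then: (i) there exist functions $c^s_{\varepsilon,+}(t),c^s_{\varepsilon,-}(t)$ such that $$\Phi^{s,t}_\varepsilon(\eta_0,\xi_0)=\begin{pmatrix}U^s_{\varepsilon,+}(t)c^s_{\varepsilon,+}(t)+U^s_{\varepsilon,-}(t)c^s_{\varepsilon,-}(t)\\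 \imath\varepsilon^{-1/2}K_\varepsilon(t)\big[U^s_{\varepsilon,+}(t)c^s_{\varepsilon,+}(t)-U^s_{\varepsilon,-}(t)c^s_{\varepsilon,-}(t)\big]\end{pmatrix}$$ and $|c^s_{\varepsilon,+}(t)|,|c^s_{\varepsilon,-}(t)|\le C(|\eta_0|+\varepsilon^{1/2}|\xi_0|)$, with $C$ independent of $\varepsilon,\eta_0,\xi_0$; (ii) $\Phi^{s,t}_\varepsilon(\eta_0,\xi_0)=\big(\mathcal{O}(|\eta_0|+\varepsilon^{1/2}|\xi_0|),\ \mathcal{O}(\varepsilon^{-1/2}|\eta_0|+|\xi_0|)\big)$, with implied constants independent of $\varepsilon,\eta_0,\xi_0$.
   Context: $\mathcal{S}^{d'}_{++}$ is the set of real symmetric positive definite $d'\times d'$ matrices, and $A(r)^{1/2}$ is the symmetric positive definite square root. In the paper, $r_\varepsilon$ is the atomic component of the solution of the XLMD system $\ddot r_\varepsilon=F(r_\varepsilon)-\frac{\partial Q}{\partial r}(r_\varepsilon,x_\varepsilon)$, $\varepsilon\ddot x_\varepsilon=b(r_\varepsilon)-A(r_\varepsilon)x_\varepsilon$ with $Q(r,x)=\tfrac12x^\top A(r)x-b(r)^\top x$, and the only properties used are the stated regularity and $\varepsilon$-uniform a priori bounds on $[0,t_f]$; the constants may depend on $t_f$ but not on $\varepsilon$, $s$, $t$. *)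

theory Defs
  imports "HOL-Analysis.Analysis"
begin

definition C3_on :: "'a::real_normed_vector set \<Rightarrow> ('a \<Rightarrow> 'b::real_normed_vector) \<Rightarrow> bool" where
  "C3_on S f \<longleftrightarrow>
     (\<exists>(f1 :: 'a \<Rightarrow> 'a \<Rightarrow>\<^sub>L 'b) (f2 :: 'a \<Rightarrow> 'a \<Rightarrow>\<^sub>L ('a \<Rightarrow>\<^sub>L 'b))
        (f3 :: 'a \<Rightarrow> 'a \<Rightarrow>\<^sub>L ('a \<Rightarrow>\<^sub>L ('a \<Rightarrow>\<^sub>L 'b))).
        (\<forall>x\<in>S. (f has_derivative blinfun_apply (f1 x)) (at x within S)) \<and>
        (\<forall>x\<in>S. (f1 has_derivative blinfun_apply (f2 x)) (at x within S)) \<and>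
        (\<forall>x\<in>S. (f2 has_derivative blinfun_apply (f3 x)) (at x within S)) \<and>
        continuous_on S f3)"

definition sym_posdef :: "real^'n^'n \<Rightarrow> bool" where
  "sym_posdef M \<longleftrightarrow> transpose M = M \<and> (\<forall>x. x \<noteq> 0 \<longrightarrow> x \<bullet> (M *v x) > 0)"

definition msqrt :: "real^'n^'n \<Rightarrow> real^'n^'n" where
  "msqrt M = (THE S. sym_posdef S \<and> S ** S = M)"

definition cmat :: "real^'n^'m \<Rightarrow> complex^'n^'m" where
  "cmat M = (\<chi> i j. complex_of_real (M $ i $ j))"

definition cvec :: "real^'n \<Rightarrow> complex^'n" where
  "cvec x = (\<chi> i. complex_of_real (x $ i))"

end

theory Submission
  imports Defs
begin


lemma sym_inner:
  fixes M :: "real^'n^'n"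
  assumes "transpose M = M"
  shows "x \<bullet> (M *v y) = (M *v x) \<bullet> y"
  by (metis assms dot_lmul_matrix transpose_matrix_vector)

lemma psd_null:
  fixes N :: "real^'n^'n"
  assumes sym: "transpose N = N" and V: "subspace V"
    and psd: "\<And>x. x \<in> V \<Longrightarrow> x \<bullet> (N *v x) \<ge> 0"
    and v: "v \<in> V" "v \<bullet> (N *v v) = 0" and w: "w \<in> V"
  shows "w \<bullet> (N *v v) = 0"
proof -
  have q: "0 \<le> 2 * t * (w \<bullet> (N *v v)) + t^2 * (w \<bullet> (N *v w))" for t
  proof -
    have "v + t *\<^sub>R w \<in> V" using V v w by (simp add: subspace_add subspace_scale)
    then have "0 \<le> (v + t *\<^sub>R w) \<bullet> (N *v (v + t *\<^sub>R w))" by (rule psd)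
    also have "\<dots> = v \<bullet> (N *v v) + t * (v \<bullet> (N *v w)) + t * (w \<bullet> (N *v v)) + t^2 * (w \<bullet> (N *v w))"
      by (simp add: matrix_vector_right_distrib matrix_vector_mult_scaleR inner_add_left inner_add_right algebra_simps power2_eq_square)
    also have "v \<bullet> (N *v w) = w \<bullet> (N *v v)"
      using sym_inner[OF sym, of v w] by (simp add: inner_commute)
    finally show ?thesis using v by (simp add: algebra_simps)
  qed
  show ?thesis
  proof (rule ccontr)
    assume ne: "w \<bullet> (N *v v) \<noteq> 0"
    define a where "a = w \<bullet> (N *v v)"
    define b where "b = w \<bullet> (N *v w)"
    have b0: "b \<ge> 0" using psd w b_def by simp
    define t where "t = - a / (2 * (b + 1))"
    have "0 \<le> 2 * t * a + t^2 * b" using q a_def b_def by simp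
    moreover have "2 * t * a + t^2 * b < 0"
    proof -
      have h0: "t^2 * b \<le> t^2 * (b+1)" by (simp add: mult_left_mono)
      have h1: "t^2 * (b+1) = a^2 / (4 * (b+1))"
      proof -
        have "t^2 = a^2 / (4 * (b+1)^2)" by (simp add: t_def power_divide power_mult_distrib power2_eq_square algebra_simps)
        then show ?thesis using b0 by (simp add: power2_eq_square)
      qed
      have h2: "2 * t * a = - (a^2 / (b+1))" using b0 by (simp add: t_def power2_eq_square field_simps)
      have "a^2 > 0" using ne a_def by simp
      then have h3: "a^2 / (4 * (b+1)) < a^2 / (b+1)" using b0 by (intro divide_strict_left_mono) auto
      show ?thesis using h0 h1 h2 h3 by linarith
    qed
    ultimately show False by simp
  qed
qed

lemma transpose_diff: "transpose (A - B) = transpose A - transpose (B::real^'n^'n)"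
  by (simp add: transpose_def vec_eq_iff)

lemma spectral_subspace:
  fixes M :: "real^'n^'n"
  assumes sym: "transpose M = M"
  shows "subspace V \<Longrightarrow> (\<forall>x\<in>V. M *v x \<in> V) \<Longrightarrow> \<exists>B. B \<subseteq> V \<and> pairwise orthogonal B \<and>
     (\<forall>b\<in>B. norm b = 1 \<and> M *v b = (b \<bullet> (M *v b)) *\<^sub>R b) \<and> span B = V"
proof (induction "dim V" arbitrary: V rule: less_induct)
  case less
  show ?case
  proof (cases "V = {0}")
    case True then show ?thesis by (intro exI[of _ "{}"]) auto
  next
    case False
    then obtain x0 where x0: "x0 \<in> V" "x0 \<noteq> 0" using less.prems(1) subspace_0 by blast
    define S where "S = sphere (0::real^'n) 1 \<inter> V"
    have cS: "compact S" unfolding S_def using compact_Int_closed[OF compact_sphere closed_subspace[OF less.prems(1)]] .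
    have "x0 /\<^sub>R norm x0 \<in> S" using x0 less.prems(1) by (simp add: S_def subspace_scale)
    then have nS: "S \<noteq> {}" by blast
    have cont: "continuous_on S (\<lambda>y. y \<bullet> (M *v y))"
      by (intro continuous_on_inner continuous_on_id linear_continuous_on matrix_vector_mul_bounded_linear)
    obtain v where v: "v \<in> S" "\<And>y. y \<in> S \<Longrightarrow> y \<bullet> (M *v y) \<le> v \<bullet> (M *v v)"
      using continuous_attains_sup[OF cS nS cont] by blast
    have vV: "v \<in> V" and nv: "norm v = 1" using v(1) by (auto simp: S_def)
    define l where "l = v \<bullet> (M *v v)"
    define N where "N = l *\<^sub>R mat 1 - M"
    have Nx: "N *v x = l *\<^sub>R x - M *v x" for x
      by (simp add: N_def matrix_vector_mult_diff_rdistrib flip: scaleR_matrix_vector_assoc)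
    have symN: "transpose N = N" by (simp add: N_def transpose_diff transpose_scalar sym)
    have psd: "x \<bullet> (N *v x) \<ge> 0" if "x \<in> V" for x
    proof (cases "x = 0")
      case True then show ?thesis by simp
    next
      case False
      define u where "u = x /\<^sub>R norm x"
      have "u \<in> S" using False that less.prems(1) by (simp add: S_def u_def subspace_scale)
      then have "u \<bullet> (M *v u) \<le> l" using v(2) l_def by blast
      moreover have "u \<bullet> (M *v u) = (x \<bullet> (M *v x)) / (norm x)^2"
        by (simp add: u_def matrix_vector_mult_scaleR power2_eq_square divide_inverse)
      ultimately have "x \<bullet> (M *v x) \<le> l * (norm x)^2" using False by (simp add: field_simps)
      then show ?thesis by (simp add: Nx inner_diff_right power2_norm_eq_inner)
    qed
    have vNv: "v \<bullet> (N *v v) = 0" using nv by (simp add: Nx inner_diff_right l_def power2_norm_eq_inner[symmetric])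
    have MvV: "M *v v \<in> V" using less.prems(2) vV by blast
    have NvV: "N *v v \<in> V" unfolding Nx using vV MvV less.prems(1) by (simp add: subspace_diff subspace_scale)
    have "(N *v v) \<bullet> (N *v v) = 0" by (rule psd_null[OF symN less.prems(1) psd vV vNv NvV])
    then have "N *v v = 0" by simp
    then have Mv: "M *v v = l *\<^sub>R v" by (simp add: Nx)
    define W where "W = V \<inter> {x. v \<bullet> x = 0}"
    have sW: "subspace W" unfolding W_def by (intro subspace_inter less.prems(1) subspace_hyperplane)
    have iW: "\<forall>x\<in>W. M *v x \<in> W"
    proof
      fix x assume "x \<in> W"
      then have "x \<in> V" "v \<bullet> x = 0" by (auto simp: W_def)
      moreover have "v \<bullet> (M *v x) = (M *v v) \<bullet> x" by (rule sym_inner[OF sym])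
      ultimately have "v \<bullet> (M *v x) = 0" using Mv by simp
      moreover have "M *v x \<in> V" using less.prems(2) \<open>x \<in> V\<close> by blast
      ultimately show "M *v x \<in> W" by (simp add: W_def)
    qed
    have "span W \<subset> span V"
    proof -
      have WV: "W \<subseteq> V" by (auto simp: W_def)
      have vv: "v \<bullet> v = 1" using nv by (simp flip: power2_norm_eq_inner)
      moreover have "v \<notin> W" using vv by (simp add: W_def)
      ultimately have "W \<subset> V" using vV WV by blast
      moreover have "span W = W" using sW by (metis span_eq_iff)
      moreover have "span V = V" using less.prems(1) by (metis span_eq_iff)
      ultimately show ?thesis by metis
    qed
    then have "dim W < dim V" by (rule dim_psubset)
    from less.hyps[OF this sW iW] obtain B' where B': "B' \<subseteq> W" "pairwise orthogonal B'"
       "\<forall>b\<in>B'. norm b = 1 \<and> M *v b = (b \<bullet> (M *v b)) *\<^sub>R b" "span B' = W"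
      by blast
    show ?thesis
    proof (intro exI[of _ "insert v B'"] conjI)
      show "insert v B' \<subseteq> V" using B'(1) vV by (auto simp: W_def)
      show "pairwise orthogonal (insert v B')"
        using B'(1,2) by (auto simp: pairwise_insert W_def orthogonal_def inner_commute)
      show "\<forall>b\<in>insert v B'. norm b = 1 \<and> M *v b = (b \<bullet> (M *v b)) *\<^sub>R b"
        using B'(3) nv Mv by (simp add: l_def flip: power2_norm_eq_inner)
      show "span (insert v B') = V"
      proof
        show "span (insert v B') \<subseteq> V"
          using B'(1) vV less.prems(1) by (intro span_minimal) (auto simp: W_def)
        show "V \<subseteq> span (insert v B')"
        proof
          fix x assume x: "x \<in> V"
          have "x - (v \<bullet> x) *\<^sub>R v \<in> W"
            using x vV less.prems(1) nv by (simp add: W_def subspace_diff subspace_scale inner_diff_right flip: power2_norm_eq_inner)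
          then show "x \<in> span (insert v B')" unfolding span_breakdown_eq using B'(4) by blast
        qed
      qed
    qed
  qed
qed

lemma spectral:
  fixes M :: "real^'n^'n"
  assumes sym: "transpose M = M"
  obtains B where "finite B" "pairwise orthogonal B" "\<And>b. b \<in> B \<Longrightarrow> norm b = 1"
    "\<And>b. b \<in> B \<Longrightarrow> M *v b = (b \<bullet> (M *v b)) *\<^sub>R b" "span B = UNIV"
proof -
  obtain B where B: "pairwise orthogonal B"
     "\<forall>b\<in>B. norm b = 1 \<and> M *v b = (b \<bullet> (M *v b)) *\<^sub>R b" "span B = UNIV"
    using spectral_subspace[OF sym subspace_UNIV] by blast
  then show ?thesis using that pairwise_orthogonal_imp_finite by blast
qed

lemma onb_expand:
  fixes B :: "(real^'n) set"
  assumes "finite B" "pairwise orthogonal B" "\<And>b. b \<in> B \<Longrightarrow> norm b = 1" "span B = UNIV"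
  shows "x = (\<Sum>b\<in>B. (x \<bullet> b) *\<^sub>R b)"
  using orthonormal_basis_expand[OF assms(2) assms(3), of x] assms(1,4) by simp

lemma onb_inner:
  fixes B :: "(real^'n) set"
  assumes "pairwise orthogonal B" "\<And>b. b \<in> B \<Longrightarrow> norm b = 1" "b \<in> B" "c \<in> B"
  shows "c \<bullet> b = (if c = b then 1 else 0)"
proof (cases "c = b")
  case True then show ?thesis using assms(2,4) by (simp flip: power2_norm_eq_inner)
next
  case False then show ?thesis using assms(1,3,4) by (auto simp: pairwise_def orthogonal_def)
qed

lemma sqrt_exists:
  fixes M :: "real^'n^'n"
  assumes pd: "sym_posdef M"
  shows "\<exists>S. sym_posdef S \<and> S ** S = M"
proof -
  have sym: "transpose M = M" using pd by (simp add: sym_posdef_def)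
  obtain B where B: "finite B" "pairwise orthogonal B" "\<And>b. b \<in> B \<Longrightarrow> norm b = 1"
    "\<And>b. b \<in> B \<Longrightarrow> M *v b = (b \<bullet> (M *v b)) *\<^sub>R b" "span B = UNIV"
    using spectral[OF sym] by blast
  define lam where "lam b = b \<bullet> (M *v b)" for b
  have lam_pos: "lam b > 0" if "b \<in> B" for b
  proof -
    have "b \<noteq> 0" using B(3)[OF that] by auto
    then show ?thesis using pd by (simp add: sym_posdef_def lam_def)
  qed
  define f where "f x = (\<Sum>b\<in>B. (sqrt (lam b) * (x \<bullet> b)) *\<^sub>R b)" for x
  have lin: "linear f"
  proof (rule linearI)
    show "f (x + y) = f x + f y" for x y
      by (simp add: f_def inner_add_left algebra_simps scaleR_add_left sum.distrib)
    show "f (c *\<^sub>R x) = c *\<^sub>R f x" for c x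
      by (simp add: f_def scaleR_sum_right algebra_simps)
  qed
  define S where "S = matrix f"
  have Sx: "S *v x = f x" for x
    using matrix_vector_mul(2)[OF lin] by (metis S_def)
  have orth: "c \<bullet> b = (if c = b then 1 else 0)" if "b \<in> B" "c \<in> B" for b c
    using onb_inner[OF B(2) B(3) that] .
  have exp: "x = (\<Sum>b\<in>B. (x \<bullet> b) *\<^sub>R b)" for x
    using onb_expand[OF B(1,2,3,5)] .
  have fb: "f x \<bullet> b = sqrt (lam b) * (x \<bullet> b)" if "b \<in> B" for x b
  proof -
    have "f x \<bullet> b = (\<Sum>c\<in>B. sqrt (lam c) * (x \<bullet> c) * (c \<bullet> b))"
      by (simp add: f_def inner_sum_left)
    also have "\<dots> = (\<Sum>c\<in>B. if c = b then sqrt (lam c) * (x \<bullet> c) else 0)"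
      by (rule sum.cong) (auto simp: orth that)
    also have "\<dots> = sqrt (lam b) * (x \<bullet> b)" using B(1) that by simp
    finally show ?thesis .
  qed
  have Mx: "M *v x = (\<Sum>b\<in>B. (lam b * (x \<bullet> b)) *\<^sub>R b)" for x
  proof -
    have "M *v x = M *v (\<Sum>b\<in>B. (x \<bullet> b) *\<^sub>R b)" using exp[of x] by simp
    also have "\<dots> = (\<Sum>b\<in>B. (x \<bullet> b) *\<^sub>R (M *v b))"
      by (simp add: linear_sum[OF matrix_vector_mul_linear] matrix_vector_mult_scaleR o_def)
    also have "\<dots> = (\<Sum>b\<in>B. (lam b * (x \<bullet> b)) *\<^sub>R b)"
      by (rule sum.cong) (use B(4) in \<open>auto simp flip: lam_def\<close>)
    finally show ?thesis .
  qed
  have SS: "S ** S = M"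
  proof (subst matrix_eq, intro allI)
    fix x
    have "(S ** S) *v x = f (f x)" by (simp add: Sx flip: matrix_vector_mul_assoc)
    also have "\<dots> = (\<Sum>b\<in>B. (lam b * (x \<bullet> b)) *\<^sub>R b)"
      unfolding f_def[of "f x"]
      by (rule sum.cong) (auto simp: fb lam_pos less_imp_le)
    also have "\<dots> = M *v x" by (simp add: Mx)
    finally show "(S ** S) *v x = M *v x" .
  qed
  have symf: "x \<bullet> f z = f x \<bullet> z" for x z
    by (simp add: f_def inner_sum_left inner_sum_right inner_commute mult.commute mult.left_commute)
  have symS: "transpose S = S"
  proof (subst matrix_eq, intro allI)
    fix x
    show "transpose S *v x = S *v x"
    proof (subst vector_eq_rdot[symmetric], intro allI)
      fix z
      have "(transpose S *v x) \<bullet> z = x \<bullet> (S *v z)" by (simp add: dot_lmul_matrix)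
      also have "\<dots> = (S *v x) \<bullet> z" by (simp add: Sx symf)
      finally show "(transpose S *v x) \<bullet> z = (S *v x) \<bullet> z" .
    qed
  qed
  have posS: "x \<bullet> (S *v x) > 0" if "x \<noteq> 0" for x
  proof -
    have "x \<bullet> (S *v x) = (\<Sum>b\<in>B. sqrt (lam b) * (x \<bullet> b)^2)"
      by (simp add: Sx f_def inner_sum_right power2_eq_square mult.commute mult.left_commute inner_commute)
    moreover obtain b where b: "b \<in> B" "x \<bullet> b \<noteq> 0"
    proof (rule ccontr)
      assume "\<not> thesis"
      then have "\<forall>b\<in>B. x \<bullet> b = 0" using that by blast
      then have "x = 0" using exp[of x] by simp
      then show False using \<open>x \<noteq> 0\<close> by simp
    qed
    moreover have "0 < (\<Sum>b\<in>B. sqrt (lam b) * (x \<bullet> b)^2)"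
    proof (rule sum_pos2[OF B(1) b(1)])
      show "0 < sqrt (lam b) * (x \<bullet> b)^2" using b lam_pos by simp
      show "0 \<le> sqrt (lam i) * (x \<bullet> i)^2" if "i \<in> B" for i
        using lam_pos[OF that] by simp
    qed
    ultimately show ?thesis by simp
  qed
  show ?thesis using SS symS posS by (auto simp: sym_posdef_def)
qed

lemma sqrt_unique:
  fixes S T :: "real^'n^'n"
  assumes S: "sym_posdef S" and T: "sym_posdef T" and eq: "S ** S = T ** T"
  shows "S = T"
proof -
  define D where "D = S - T"
  have Dx: "D *v y = S *v y - T *v y" for y by (simp add: D_def matrix_vector_mult_diff_rdistrib)
  have symS: "transpose S = S" and symT: "transpose T = T" using S T by (auto simp: sym_posdef_def)
  have symD: "transpose D = D" by (simp add: D_def transpose_diff symS symT)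
  obtain B where B: "finite B" "pairwise orthogonal B" "\<And>b. b \<in> B \<Longrightarrow> norm b = 1"
    "\<And>b. b \<in> B \<Longrightarrow> D *v b = (b \<bullet> (D *v b)) *\<^sub>R b" "span B = UNIV"
    using spectral[OF symD] by blast
  have Db: "D *v b = 0" if b: "b \<in> B" for b
  proof -
    define mu where "mu = b \<bullet> (D *v b)"
    have bD: "D *v b = mu *\<^sub>R b" unfolding mu_def by (rule B(4)[OF b])
    have "b \<noteq> 0" using B(3)[OF b] by auto
    then have pos: "b \<bullet> (S *v b) + b \<bullet> (T *v b) > 0" using S T by (simp add: sym_posdef_def add_pos_pos)
    have "0 = b \<bullet> ((S ** S) *v b) - b \<bullet> ((T ** T) *v b)" using eq by simp
    also have "\<dots> = b \<bullet> (S *v (D *v b)) + b \<bullet> (D *v (T *v b))"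
      by (simp add: Dx matrix_vector_mult_diff_distrib inner_diff_right flip: matrix_vector_mul_assoc)
    also have "b \<bullet> (D *v (T *v b)) = (D *v b) \<bullet> (T *v b)" by (rule sym_inner[OF symD])
    also have "b \<bullet> (S *v (D *v b)) + (D *v b) \<bullet> (T *v b) = mu * (b \<bullet> (S *v b) + b \<bullet> (T *v b))"
      by (simp add: bD matrix_vector_mult_scaleR algebra_simps)
    finally have "mu = 0" using pos by simp
    then show ?thesis using bD by simp
  qed
  have "D *v x = 0" for x
  proof -
    have "D *v x = D *v (\<Sum>b\<in>B. (x \<bullet> b) *\<^sub>R b)" using onb_expand[OF B(1,2,3,5), of x] by simp
    also have "\<dots> = (\<Sum>b\<in>B. (x \<bullet> b) *\<^sub>R (D *v b))"
      by (simp add: linear_sum[OF matrix_vector_mul_linear] matrix_vector_mult_scaleR o_def)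
    also have "\<dots> = 0" by (simp add: Db)
    finally show ?thesis .
  qed
  then show ?thesis by (simp add: matrix_eq Dx)
qed

lemma msqrt_props:
  fixes M :: "real^'n^'n"
  assumes "sym_posdef M"
  shows "sym_posdef (msqrt M) \<and> msqrt M ** msqrt M = M"
proof -
  have "\<exists>!S. sym_posdef S \<and> S ** S = M"
    using sqrt_exists[OF assms] sqrt_unique by blast
  then show ?thesis unfolding msqrt_def by (rule theI')
qed



definition rv :: "complex^'n \<Rightarrow> real^'n" where "rv w = (\<chi> i. Re (w$i))"
definition iv :: "complex^'n \<Rightarrow> real^'n" where "iv w = (\<chi> i. Im (w$i))"

lemma mat_mult_vec_comp: "(mat c *v u) $ i = c * (u $ i :: 'a::comm_semiring_1)"
proof -
  have "(mat c *v u) $ i = (\<Sum>j\<in>UNIV. if j = i then c * u $ j else 0)"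
  proof -
    have "\<And>j. (if i = j then c else 0) * u $ j = (if j = i then c * u $ j else 0)" by simp
    then show ?thesis by (simp add: matrix_vector_mult_def mat_def)
  qed
  then show ?thesis by simp
qed

lemma cmat_re: "Re ((cmat K *v w) $ i) = (K *v rv w) $ i"
  by (simp add: cmat_def matrix_vector_mult_def rv_def)

lemma cmat_im: "Im ((cmat K *v w) $ i) = (K *v iv w) $ i"
  by (simp add: cmat_def matrix_vector_mult_def iv_def)

lemma skew_zero:
  fixes K :: "real^'n^'n" and w :: "complex^'n"
  assumes sym: "transpose K = K" and c: "Re c = 0"
  shows "w \<bullet> (mat c *v (cmat K *v w)) = 0"
proof -
  define u where "u = cmat K *v w"
  have "w \<bullet> (mat c *v u) = (\<Sum>i\<in>UNIV. Re (w$i) * Re (c * u$i) + Im (w$i) * Im (c * u$i))"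
    by (simp add: inner_vec_def mat_mult_vec_comp inner_complex_def)
  also have "\<dots> = (\<Sum>i\<in>UNIV. Im c * ((iv w)$i * (K *v rv w)$i - (rv w)$i * (K *v iv w)$i))"
    using c by (intro sum.cong) (auto simp: u_def cmat_re cmat_im rv_def iv_def algebra_simps)
  also have "\<dots> = Im c * (iv w \<bullet> (K *v rv w) - rv w \<bullet> (K *v iv w))"
    by (simp add: inner_vec_def sum_distrib_left sum_subtractf right_diff_distrib)
  also have "iv w \<bullet> (K *v rv w) = rv w \<bullet> (K *v iv w)"
    using sym_inner[OF sym, of "iv w" "rv w"] by (simp add: inner_commute)
  finally show ?thesis by (simp add: u_def)
qed

lemma bb_mv: "bounded_bilinear (\<lambda>(M::'a::{euclidean_space,real_algebra_1}^'n^'m) x. M *v x)"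
  unfolding bilinear_conv_bounded_bilinear[symmetric] bilinear_def
  by (auto simp: linear_iff matrix_vector_mult_def vec_eq_iff algebra_simps sum.distrib scaleR_sum_right)

lemma unitary_flow:
  fixes U :: "real \<Rightarrow> complex^'n^'n" and K :: "real \<Rightarrow> real^'n^'n"
  assumes D: "\<forall>t\<in>{s..tf}. (U has_vector_derivative (mat c ** cmat (K t) ** U t)) (at t within {s..tf})"
    and U0: "U s = mat 1" and c: "Re c = 0" and sym: "\<forall>t\<in>{s..tf}. transpose (K t) = K t"
    and t: "t \<in> {s..tf}"
  shows "norm (U t *v v) = norm v"
proof -
  define g where "g \<tau> = (U \<tau> *v v) \<bullet> (U \<tau> *v v)" for \<tau>
  have bl: "bounded_linear (\<lambda>M::complex^'n^'n. M *v v)"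
    by (rule bounded_bilinear.bounded_linear_left[OF bb_mv])
  have "(g has_derivative (\<lambda>h. 0)) (at \<tau> within {s..tf})" if tau: "\<tau> \<in> {s..tf}" for \<tau>
  proof -
    have w: "((\<lambda>\<tau>. U \<tau> *v v) has_vector_derivative ((mat c ** cmat (K \<tau>) ** U \<tau>) *v v)) (at \<tau> within {s..tf})"
      by (rule bounded_linear.has_vector_derivative[OF bl D[rule_format, OF tau]])
    have "(g has_derivative (\<lambda>h. (U \<tau> *v v) \<bullet> (h *\<^sub>R ((mat c ** cmat (K \<tau>) ** U \<tau>) *v v))
            + (h *\<^sub>R ((mat c ** cmat (K \<tau>) ** U \<tau>) *v v)) \<bullet> (U \<tau> *v v))) (at \<tau> within {s..tf})"
      unfolding g_def by (rule has_derivative_inner[OF w[unfolded has_vector_derivative_def] w[unfolded has_vector_derivative_def]])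
    moreover have "(U \<tau> *v v) \<bullet> ((mat c ** cmat (K \<tau>) ** U \<tau>) *v v) = 0"
      using skew_zero[OF sym[rule_format, OF tau] c, of "U \<tau> *v v"]
      by (simp add: matrix_vector_mul_assoc matrix_mul_assoc)
    ultimately show ?thesis by (simp add: inner_commute)
  qed
  then obtain k where "\<forall>x\<in>{s..tf}. g x = k"
    using has_derivative_zero_constant[of "{s..tf}" g] by auto
  then have "g t = g s" using t by auto
  then show ?thesis using U0 by (simp add: g_def norm_eq_sqrt_inner)
qed



lemma energy:
  fixes y y1 :: "real \<Rightarrow> real^'n" and Am Ad :: "real \<Rightarrow> real^'n^'n"
  assumes e: "e > 0" and t: "t \<in> {s..tf}" and C: "C > 0" and L: "L \<ge> 0"
    and dy: "\<forall>\<tau>\<in>{s..tf}. (y has_vector_derivative y1 \<tau>) (at \<tau> within {s..tf})"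
    and dy1: "\<forall>\<tau>\<in>{s..tf}. (y1 has_vector_derivative (- (1 / e) *\<^sub>R (Am \<tau> *v y \<tau>))) (at \<tau> within {s..tf})"
    and dA: "\<forall>\<tau>\<in>{s..tf}. (Am has_vector_derivative Ad \<tau>) (at \<tau> within {s..tf})"
    and sym: "\<forall>\<tau>\<in>{s..tf}. transpose (Am \<tau>) = Am \<tau>"
    and lower: "\<forall>\<tau>\<in>{s..tf}. \<forall>x. x \<bullet> (Am \<tau> *v x) \<ge> (1 / C) * (x \<bullet> x)"
    and Adb: "\<forall>\<tau>\<in>{s..tf}. \<forall>x. \<bar>x \<bullet> (Ad \<tau> *v x)\<bar> \<le> L * (x \<bullet> x)"
  shows "y1 t \<bullet> y1 t + (1 / e) * (y t \<bullet> (Am t *v y t))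
     \<le> (y1 s \<bullet> y1 s + (1 / e) * (y s \<bullet> (Am s *v y s))) * exp (L * C * (t - s))"
proof -
  define E where "E \<tau> = y1 \<tau> \<bullet> y1 \<tau> + (1 / e) * (y \<tau> \<bullet> (Am \<tau> *v y \<tau>))" for \<tau>
  define E' where "E' \<tau> = (1 / e) * (y \<tau> \<bullet> (Ad \<tau> *v y \<tau>))" for \<tau>
  have dE: "(E has_real_derivative E' \<tau>) (at \<tau> within {s..tf})" if tau: "\<tau> \<in> {s..tf}" for \<tau>
  proof -
    note dy' = dy[rule_format, OF tau] and dy1' = dy1[rule_format, OF tau] and dA' = dA[rule_format, OF tau]
    have d1: "((\<lambda>\<tau>. y1 \<tau> \<bullet> y1 \<tau>) has_vector_derivative
        (y1 \<tau> \<bullet> (- (1 / e) *\<^sub>R (Am \<tau> *v y \<tau>)) + (- (1 / e) *\<^sub>R (Am \<tau> *v y \<tau>)) \<bullet> y1 \<tau>)) (at \<tau> within {s..tf})"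
      by (rule bounded_bilinear.has_vector_derivative[OF bounded_bilinear_inner dy1' dy1'])
    have d2: "((\<lambda>\<tau>. Am \<tau> *v y \<tau>) has_vector_derivative (Am \<tau> *v y1 \<tau> + Ad \<tau> *v y \<tau>)) (at \<tau> within {s..tf})"
      using bounded_bilinear.has_vector_derivative[OF bb_mv dA' dy'] by simp
    have d3: "((\<lambda>\<tau>. y \<tau> \<bullet> (Am \<tau> *v y \<tau>)) has_vector_derivative
        (y \<tau> \<bullet> (Am \<tau> *v y1 \<tau> + Ad \<tau> *v y \<tau>) + y1 \<tau> \<bullet> (Am \<tau> *v y \<tau>))) (at \<tau> within {s..tf})"
      by (rule bounded_bilinear.has_vector_derivative[OF bounded_bilinear_inner dy' d2])
    have "(E has_real_derivative
        ((y1 \<tau> \<bullet> (- (1 / e) *\<^sub>R (Am \<tau> *v y \<tau>)) + (- (1 / e) *\<^sub>R (Am \<tau> *v y \<tau>)) \<bullet> y1 \<tau>)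
         + (1 / e) * (y \<tau> \<bullet> (Am \<tau> *v y1 \<tau> + Ad \<tau> *v y \<tau>) + y1 \<tau> \<bullet> (Am \<tau> *v y \<tau>)))) (at \<tau> within {s..tf})"
      unfolding E_def
      using DERIV_add[OF d1[folded has_real_derivative_iff_has_vector_derivative]
          DERIV_cmult[OF d3[folded has_real_derivative_iff_has_vector_derivative], of "1 / e"]] .
    moreover have "y \<tau> \<bullet> (Am \<tau> *v y1 \<tau>) = y1 \<tau> \<bullet> (Am \<tau> *v y \<tau>)"
      using sym_inner[OF sym[rule_format, OF tau], of "y \<tau>" "y1 \<tau>"] by (simp add: inner_commute)
    ultimately show ?thesis
      by (simp add: E'_def inner_add_right algebra_simps inner_commute)
  qed
  have cE: "continuous_on {s..tf} E"
    using dE by (intro has_derivative_continuous_on) (auto simp: has_field_derivative_def)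
  define F where "F \<tau> = E \<tau> * exp (- (L * C) * (\<tau> - s))" for \<tau>
  have dF: "(F has_real_derivative (E' \<tau> - L * C * E \<tau>) * exp (- (L * C) * (\<tau> - s))) (at \<tau> within {s..tf})"
    if tau: "\<tau> \<in> {s..tf}" for \<tau>
    unfolding F_def using dE[OF tau]
    by (auto intro!: derivative_eq_intros simp: algebra_simps)
  have E'le: "E' \<tau> \<le> L * C * E \<tau>" if tau: "\<tau> \<in> {s..tf}" for \<tau>
  proof -
    have h1: "E' \<tau> \<le> (1 / e) * (L * (y \<tau> \<bullet> y \<tau>))"
      using Adb[rule_format, OF tau, of "y \<tau>"] e unfolding E'_def
      by (intro mult_left_mono) auto
    have h2: "L * (y \<tau> \<bullet> y \<tau>) \<le> L * (C * (y \<tau> \<bullet> (Am \<tau> *v y \<tau>)))"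
    proof -
      have "(1 / C) * (y \<tau> \<bullet> y \<tau>) \<le> y \<tau> \<bullet> (Am \<tau> *v y \<tau>)" using lower tau by blast
      then have "y \<tau> \<bullet> y \<tau> \<le> C * (y \<tau> \<bullet> (Am \<tau> *v y \<tau>))" using C by (simp add: field_simps)
      then show ?thesis using L by (rule mult_left_mono)
    qed
    have "(1 / e) * (L * (y \<tau> \<bullet> y \<tau>)) \<le> (1 / e) * (L * (C * (y \<tau> \<bullet> (Am \<tau> *v y \<tau>))))"
      using h2 e by (intro mult_left_mono[OF h2]) auto
    with h1 have "E' \<tau> \<le> L * C * ((1 / e) * (y \<tau> \<bullet> (Am \<tau> *v y \<tau>)))" by (simp add: algebra_simps)
    also have "\<dots> \<le> L * C * E \<tau>"
      using L C by (intro mult_left_mono) (auto simp: E_def)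
    finally show ?thesis .
  qed
  have "F t \<le> F s"
  proof (rule DERIV_nonpos_imp_decreasing_open[of s t F])
    show "s \<le> t" using t by simp
    show "\<exists>y. DERIV F x :> y \<and> y \<le> 0" if "s < x" "x < t" for x
    proof -
      have x: "x \<in> {s..tf}" using that t by auto
      have "at x within {s..tf} = at x" using that t by (intro at_within_Icc_at) auto
      then have "DERIV F x :> (E' x - L * C * E x) * exp (- (L * C) * (x - s))" using dF[OF x] by simp
      moreover have "(E' x - L * C * E x) * exp (- (L * C) * (x - s)) \<le> 0"
        using E'le[OF x] by (simp add: mult_nonpos_nonneg)
      ultimately show ?thesis by blast
    qed
    show "continuous_on {s..t} F"
    proof -
      have "continuous_on {s..tf} F" unfolding F_def using cE by (intro continuous_intros)
      then show ?thesis by (rule continuous_on_subset) (use t in auto)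
    qed
  qed
  then have "E t * exp (- (L * C) * (t - s)) \<le> E s" by (simp add: F_def)
  then have "E t * exp (- (L * C) * (t - s)) * exp (L * C * (t - s)) \<le> E s * exp (L * C * (t - s))"
    by (rule mult_right_mono) simp
  moreover have "E t * exp (- (L * C) * (t - s)) * exp (L * C * (t - s)) = E t"
  proof -
    have "exp (- (L * C) * (t - s)) * exp (L * C * (t - s)) = 1"
      by (simp add: exp_minus)
    then show ?thesis by (simp add: mult.assoc)
  qed
  ultimately have "E t \<le> E s * exp (L * C * (t - s))" by linarith
  then show ?thesis by (simp add: E_def)
qed



lemma mv_norm:
  fixes A :: "real^'n^'m"
  shows "norm (A *v x) \<le> real CARD('m) * real CARD('n) * norm A * norm x"
proof -
  have "onorm ((*v) A) \<le> real CARD('m) * real CARD('n) * norm A"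
  proof (rule onorm_le_matrix_component)
    fix i j
    show "\<bar>A $ i $ j\<bar> \<le> norm A"
      using component_le_norm_cart[of "A $ i" j] Finite_Cartesian_Product.norm_nth_le[of A i] by linarith
  qed
  moreover have "norm (A *v x) \<le> onorm ((*v) A) * norm x"
    by (rule onorm[OF matrix_vector_mul_bounded_linear])
  ultimately show ?thesis by (meson mult_right_mono norm_ge_zero order_trans)
qed

lemma quad_bound:
  fixes A :: "real^'n^'n"
  shows "\<bar>x \<bullet> (A *v x)\<bar> \<le> (real CARD('n) * real CARD('n) * norm A) * (x \<bullet> x)"
proof -
  have "\<bar>x \<bullet> (A *v x)\<bar> \<le> norm x * norm (A *v x)" by (rule Cauchy_Schwarz_ineq2)
  also have "\<dots> \<le> norm x * (real CARD('n) * real CARD('n) * norm A * norm x)"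
    by (intro mult_left_mono mv_norm) simp
  also have "\<dots> = (real CARD('n) * real CARD('n) * norm A) * (x \<bullet> x)"
    by (simp add: power2_eq_square flip: power2_norm_eq_inner)
  finally show ?thesis .
qed

lemma cvec_norm: "norm (cvec x) = norm x"
  by (simp add: norm_vec_def cvec_def)

lemma norm_smult_c: "norm ((c::complex) *s (v::complex^'n)) = cmod c * norm v"
  by (simp add: norm_vec_def norm_mult L2_set_right_distrib)

lemma cmat_cvec: "cmat K *v cvec z = cvec (K *v z)"
  by (simp add: vec_eq_iff cmat_def cvec_def matrix_vector_mult_def)

lemma mat_mult_apply: "(mat c ** N) *v u = (c::complex) *s (N *v u)"
  by (simp add: vec_eq_iff mat_mult_vec_comp flip: matrix_vector_mul_assoc)



lemma half_sum: "(1/2) *\<^sub>R (a - w) + (1/2) *\<^sub>R (a + w) = (a::'a::real_vector)"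
proof -
  have "(1/2) *\<^sub>R (a - w) + (1/2) *\<^sub>R (a + w) = ((1/2) + (1/2::real)) *\<^sub>R a"
    by (simp only: scaleR_add_right scaleR_diff_right scaleR_add_left) (simp add: algebra_simps)
  then show ?thesis by simp
qed

lemma half_diff: "(1/2) *\<^sub>R (a - w) - (1/2) *\<^sub>R (a + w) = - (w::'a::real_vector)"
proof -
  have "(1/2) *\<^sub>R (a - w) - (1/2) *\<^sub>R (a + w) = - (((1/2) + (1/2::real)) *\<^sub>R w)"
    by (simp only: scaleR_add_right scaleR_diff_right scaleR_add_left) (simp add: algebra_simps)
  then show ?thesis by simp
qed

lemma core:
  fixes A :: "real^'d \<Rightarrow> real^'e^'e" and f1 :: "real^'d \<Rightarrow> ((real^'d) \<Rightarrow>\<^sub>L (real^'e^'e))"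
    and rr rr1 :: "real \<Rightarrow> real^'d"
    and y y1 :: "real \<Rightarrow> real^'e" and Up Um :: "real \<Rightarrow> complex^'e^'e"
  assumes e: "e > 0" and C: "C > 0" and s: "s \<in> {0..tf}"
    and A_spd: "\<forall>q. sym_posdef (A q)"
    and A_lower: "\<forall>q x. x \<bullet> (A q *v x) \<ge> (1 / C) * (x \<bullet> x)"
    and dA: "\<forall>q. (A has_derivative blinfun_apply (f1 q)) (at q)"
    and NA: "\<forall>q\<in>cball 0 C. norm (A q) \<le> NA" and NA0: "NA \<ge> 0"
    and N1: "\<forall>q\<in>cball 0 C. norm (f1 q) \<le> N1" and N10: "N1 \<ge> 0"
    and rr_d: "\<forall>t\<in>{0..tf}. (rr has_vector_derivative rr1 t) (at t within {0..tf})"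
    and rr_bd: "\<forall>t\<in>{0..tf}. norm (rr t) \<le> C \<and> norm (rr1 t) \<le> C"
    and C'_def: "C' = (1 + sqrt C)^2 * sqrt (exp (real CARD('e) * real CARD('e) * N1 * C * C * tf))
                     * (1 + sqrt (real CARD('e) * real CARD('e) * NA))"
    and H1: "\<forall>t\<in>{s..tf}. (y has_vector_derivative y1 t) (at t within {s..tf}) \<and>
          (y1 has_vector_derivative (- (1 / e) *\<^sub>R (A (rr t) *v y t))) (at t within {s..tf})"
    and ys: "y s = \<eta>0" and y1s: "y1 s = \<xi>0"
    and HUp: "\<forall>t\<in>{s..tf}. (Up has_vector_derivative
          (mat (\<i> / complex_of_real (sqrt e)) ** cmat (msqrt (A (rr t))) ** Up t)) (at t within {s..tf})"
    and Up0: "Up s = mat 1"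
    and HUm: "\<forall>t\<in>{s..tf}. (Um has_vector_derivative
          (mat (- \<i> / complex_of_real (sqrt e)) ** cmat (msqrt (A (rr t))) ** Um t)) (at t within {s..tf})"
    and Um0: "Um s = mat 1"
  shows "(\<exists>cp cm :: real \<Rightarrow> complex^'e. \<forall>t\<in>{s..tf}.
          cvec (y t) = Up t *v cp t + Um t *v cm t \<and>
          cvec (y1 t) = (mat (\<i> / complex_of_real (sqrt e)) ** cmat (msqrt (A (rr t))))
                           *v (Up t *v cp t - Um t *v cm t) \<and>
          norm (cp t) \<le> C' * (norm \<eta>0 + sqrt e * norm \<xi>0) \<and>
          norm (cm t) \<le> C' * (norm \<eta>0 + sqrt e * norm \<xi>0)) \<and>
      (\<forall>t\<in>{s..tf}.
          norm (y t) \<le> C' * (norm \<eta>0 + sqrt e * norm \<xi>0) \<and>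
          norm (y1 t) \<le> C' * (norm \<eta>0 / sqrt e + norm \<xi>0))"
proof -
  define k where "k = real CARD('e) * real CARD('e)"
  have k0: "k \<ge> 0" by (simp add: k_def)
  define L where "L = k * N1 * C"
  define G where "G = exp (L * C * tf)"
  define M0 where "M0 = k * NA"
  define a where "a = norm \<xi>0"
  define b where "b = norm \<eta>0"
  define se where "se = sqrt e"
  define sM where "sM = sqrt M0"
  define sG where "sG = sqrt G"
  define sC where "sC = sqrt C"
  have L0: "L \<ge> 0" using k0 N10 C by (simp add: L_def)
  have M00: "M0 \<ge> 0" using k0 NA0 by (simp add: M0_def)
  have se0: "se > 0" using e by (simp add: se_def)
  have sM0: "sM \<ge> 0" by (simp add: sM_def M00)
  have sG0: "sG > 0" by (simp add: sG_def G_def)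
  have sC0: "sC > 0" using C by (simp add: sC_def)
  have a0: "a \<ge> 0" and b0: "b \<ge> 0" by (simp_all add: a_def b_def)
  have C'eq: "C' = (1 + sC)^2 * sG * (1 + sM)"
    by (simp add: C'_def sC_def sG_def sM_def G_def L_def M0_def k_def mult.assoc)
  have sym: "transpose (A q) = A q" for q using A_spd by (simp add: sym_posdef_def)
  have tin: "t \<in> {0..tf}" if "t \<in> {s..tf}" for t using that s by auto
  have rrC: "rr t \<in> cball 0 C" if "t \<in> {s..tf}" for t using rr_bd tin[OF that] by auto
  define Ad where "Ad t = blinfun_apply (f1 (rr t)) (rr1 t)" for t
  have dAm: "\<forall>\<tau>\<in>{s..tf}. ((\<lambda>t. A (rr t)) has_vector_derivative Ad \<tau>) (at \<tau> within {s..tf})"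
  proof
    fix \<tau> assume tau: "\<tau> \<in> {s..tf}"
    have "(rr has_vector_derivative rr1 \<tau>) (at \<tau> within {s..tf})"
      using rr_d tin[OF tau] by (meson has_vector_derivative_within_subset s atLeastatMost_subset_iff atLeastAtMost_iff order_refl)
    then have "(rr has_derivative (\<lambda>h. h *\<^sub>R rr1 \<tau>)) (at \<tau> within {s..tf})"
      by (simp add: has_vector_derivative_def)
    from diff_chain_within[OF this has_derivative_at_withinI[OF dA[rule_format]]]
    have "((A \<circ> rr) has_derivative (blinfun_apply (f1 (rr \<tau>)) \<circ> (\<lambda>h. h *\<^sub>R rr1 \<tau>))) (at \<tau> within {s..tf})" .
    then show "((\<lambda>t. A (rr t)) has_vector_derivative Ad \<tau>) (at \<tau> within {s..tf})"
      by (simp add: has_vector_derivative_def Ad_def o_def blinfun.scaleR_right)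
  qed
  have Adb: "\<forall>\<tau>\<in>{s..tf}. \<forall>x. \<bar>x \<bullet> (Ad \<tau> *v x)\<bar> \<le> L * (x \<bullet> x)"
  proof (intro ballI allI)
    fix \<tau> x assume tau: "\<tau> \<in> {s..tf}"
    have "norm (Ad \<tau>) \<le> norm (f1 (rr \<tau>)) * norm (rr1 \<tau>)" unfolding Ad_def by (rule norm_blinfun)
    also have "\<dots> \<le> N1 * C"
      using N1 rrC[OF tau] rr_bd tin[OF tau] N10 by (intro mult_mono) auto
    finally have nA: "norm (Ad \<tau>) \<le> N1 * C" .
    have "\<bar>x \<bullet> (Ad \<tau> *v x)\<bar> \<le> (k * norm (Ad \<tau>)) * (x \<bullet> x)"
      using quad_bound[of x "Ad \<tau>"] by (simp add: k_def)
    also have "\<dots> \<le> (k * (N1 * C)) * (x \<bullet> x)"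
      using nA k0 by (intro mult_right_mono mult_left_mono) auto
    finally show "\<bar>x \<bullet> (Ad \<tau> *v x)\<bar> \<le> L * (x \<bullet> x)" by (simp add: L_def mult.assoc)
  qed
  define E where "E t = y1 t \<bullet> y1 t + (1 / e) * (y t \<bullet> (A (rr t) *v y t))" for t
  have Apos: "u \<bullet> (A q *v u) \<ge> (1 / C) * (u \<bullet> u)" for u q using A_lower by blast
  have Aposn: "u \<bullet> (A q *v u) \<ge> 0" for u q
    using Apos[of u q] C by (meson divide_nonneg_nonneg inner_ge_zero mult_nonneg_nonneg order_trans zero_le_one less_imp_le)
  have Es: "E s \<le> a^2 + M0 / e * b^2"
  proof -
    have "\<eta>0 \<bullet> (A (rr s) *v \<eta>0) \<le> (k * norm (A (rr s))) * (\<eta>0 \<bullet> \<eta>0)"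
      using quad_bound[of \<eta>0 "A (rr s)"] by (simp add: k_def)
    also have "\<dots> \<le> M0 * b^2"
      using NA rrC[of s] s k0 unfolding M0_def b_def
      by (auto simp: power2_norm_eq_inner intro!: mult_right_mono mult_left_mono)
    finally have "(1 / e) * (\<eta>0 \<bullet> (A (rr s) *v \<eta>0)) \<le> (1 / e) * (M0 * b^2)"
      using e by (intro mult_left_mono) auto
    then show ?thesis by (simp add: E_def ys y1s a_def power2_norm_eq_inner)
  qed
  have Et: "E t \<le> G * (a + sM * b / se)^2" if t: "t \<in> {s..tf}" for t
  proof -
    have "E t \<le> E s * exp (L * C * (t - s))"
      unfolding E_def
      by (rule energy[OF e t C L0 _ _ dAm _ _ Adb, where y=y and ?y1.0=y1])
         (use H1 sym A_lower in auto)
    also have "\<dots> \<le> E s * G"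
    proof (rule mult_left_mono)
      show "exp (L * C * (t - s)) \<le> G" unfolding G_def using t s L0 C
        by (auto intro!: mult_left_mono mult_nonneg_nonneg)
      show "0 \<le> E s" unfolding E_def using e Aposn by (intro add_nonneg_nonneg mult_nonneg_nonneg) auto
    qed
    also have "\<dots> \<le> (a^2 + M0 / e * b^2) * G" using Es G_def by (intro mult_right_mono) auto
    also have "a^2 + M0 / e * b^2 \<le> (a + sM * b / se)^2"
    proof -
      have "(a + sM * b / se)^2 = a^2 + 2 * a * (sM * b / se) + sM^2 * b^2 / se^2"
        using se0 by (simp add: power2_eq_square field_simps)
      also have "sM^2 = M0" using M00 by (simp add: sM_def)
      also have "se^2 = e" using e by (simp add: se_def)
      finally show ?thesis using a0 b0 sM0 se0 by simp
    qed
    finally show ?thesis using sG0 G_def by (simp add: mult.commute mult_left_mono)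
  qed
  have y1bd: "norm (y1 t) \<le> sG * (a + sM * b / se)" if t: "t \<in> {s..tf}" for t
  proof (rule power2_le_imp_le)
    have "(norm (y1 t))^2 \<le> E t" using Aposn e by (simp add: E_def power2_norm_eq_inner)
    also have "\<dots> \<le> G * (a + sM * b / se)^2" by (rule Et[OF t])
    also have "\<dots> = (sG * (a + sM * b / se))^2" by (simp add: sG_def power_mult_distrib G_def)
    finally show "(norm (y1 t))^2 \<le> (sG * (a + sM * b / se))^2" .
    show "0 \<le> sG * (a + sM * b / se)" using sG0 a0 b0 sM0 se0 by simp
  qed
  have ybd: "norm (y t) \<le> sC * sG * (se * a + sM * b)" if t: "t \<in> {s..tf}" for t
  proof (rule power2_le_imp_le)
    have "(norm (y t))^2 \<le> C * (y t \<bullet> (A (rr t) *v y t))"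
      using Apos[of "y t" "rr t"] C by (simp add: power2_norm_eq_inner field_simps)
    also have "\<dots> = C * e * ((1 / e) * (y t \<bullet> (A (rr t) *v y t)))" using e by simp
    also have "\<dots> \<le> C * e * E t" using C e by (intro mult_left_mono) (auto simp: E_def)
    also have "\<dots> \<le> C * e * (G * (a + sM * b / se)^2)" using C e by (intro mult_left_mono Et[OF t]) auto
    also have "\<dots> = (sC * sG * (se * a + sM * b))^2"
    proof -
      have "se * (a + sM * b / se) = se * a + sM * b" using se0 by (simp add: field_simps)
      moreover have "sC^2 = C" "sG^2 = G" "se^2 = e" using C e by (simp_all add: sC_def sG_def G_def se_def)
      ultimately show ?thesis by (metis (no_types, lifting) mult.commute mult.left_commute power_mult_distrib)
    qed
    finally show "(norm (y t))^2 \<le> (sC * sG * (se * a + sM * b))^2" .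
    show "0 \<le> sC * sG * (se * a + sM * b)" using sC0 sG0 se0 a0 b0 sM0 by simp
  qed
  define X where "X = b + se * a"
  have X0: "X \<ge> 0" using b0 se0 a0 by (simp add: X_def)
  have Ybd: "norm (y t) \<le> sC * sG * (1 + sM) * X" if t: "t \<in> {s..tf}" for t
  proof -
    have "se * a + sM * b \<le> (1 + sM) * X" using se0 a0 b0 sM0 by (simp add: X_def algebra_simps)
    then have "sC * sG * (se * a + sM * b) \<le> sC * sG * ((1 + sM) * X)"
      using sC0 sG0 by (intro mult_left_mono) auto
    then show ?thesis using ybd[OF t] by (simp add: mult.assoc)
  qed
  have Y1bd: "se * norm (y1 t) \<le> sG * (1 + sM) * X" if t: "t \<in> {s..tf}" for t
  proof -
    have "se * norm (y1 t) \<le> se * (sG * (a + sM * b / se))" using y1bd[OF t] se0 by (intro mult_left_mono) auto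
    also have "\<dots> = sG * (se * a + sM * b)" using se0 by (simp add: field_simps)
    also have "\<dots> \<le> sG * ((1 + sM) * X)"
      using se0 a0 b0 sM0 sG0 by (intro mult_left_mono) (auto simp: X_def algebra_simps)
    finally show ?thesis by (simp add: mult.assoc)
  qed
  have C'ge: "sC * sG * (1 + sM) \<le> C'"
  proof -
    have "sC \<le> (1 + sC)^2" using sC0 by (simp add: power2_eq_square algebra_simps)
    then show ?thesis unfolding C'eq using sG0 sM0 by (intro mult_right_mono) auto
  qed
  have C'ge2: "sG * (1 + sM) \<le> C'"
  proof -
    have "1 \<le> (1 + sC)^2" using sC0 by (simp add: power2_eq_square algebra_simps)
    then show ?thesis unfolding C'eq using sG0 sM0 by (metis mult_right_mono mult_1 add_nonneg_nonneg zero_le_one less_imp_le mult_nonneg_nonneg mult.assoc)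
  qed
  define K where "K t = msqrt (A (rr t))" for t
  have Kp: "transpose (K t) = K t" "K t ** K t = A (rr t)" for t
    using msqrt_props[OF A_spd[rule_format, of "rr t"]] by (auto simp: K_def sym_posdef_def)
  have Kinj: "(norm x)^2 \<le> C * (norm (K t *v x))^2" for t x
  proof -
    have "x \<bullet> (A (rr t) *v x) = (K t *v x) \<bullet> (K t *v x)"
      using sym_inner[OF Kp(1)[of t], where x=x and y="K t *v x"] by (simp add: matrix_vector_mul_assoc Kp(2))
    then show ?thesis using Apos[of x "rr t"] C by (simp add: power2_norm_eq_inner field_simps)
  qed
  have Ksurj: "\<exists>z. K t *v z = w" for t w
  proof -
    have "inj (\<lambda>x. K t *v x)"
    proof (rule injI)
      fix x x' assume "K t *v x = K t *v x'"
      then have "K t *v (x - x') = 0" by (simp add: matrix_vector_mult_diff_distrib)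
      then have "(norm (x - x'))^2 \<le> 0" using Kinj[of "x - x'" t] by simp
      then show "x = x'" by simp
    qed
    then have "surj (\<lambda>x. K t *v x)" by (intro linear_injective_imp_surjective) auto
    then show ?thesis by (metis surjD)
  qed
  define z where "z t = (SOME z. K t *v z = y1 t)" for t
  have Kz: "K t *v z t = y1 t" for t unfolding z_def by (rule someI_ex[OF Ksurj])
  have zbd: "se * norm (z t) \<le> sC * (se * norm (y1 t))" for t
  proof -
    have "norm (z t) \<le> sC * norm (y1 t)"
    proof (rule power2_le_imp_le)
      show "(norm (z t))^2 \<le> (sC * norm (y1 t))^2"
        using Kinj[of "z t" t] C by (simp add: Kz power_mult_distrib sC_def)
      show "0 \<le> sC * norm (y1 t)" using sC0 by simp
    qed
    then show ?thesis using se0 by (simp add: mult_left_mono mult.left_commute)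
  qed
  define p where "p t = (1/2) *\<^sub>R (cvec (y t) - (\<i> * complex_of_real se) *s cvec (z t))" for t
  define m where "m t = (1/2) *\<^sub>R (cvec (y t) + (\<i> * complex_of_real se) *s cvec (z t))" for t
  have pm_bd: "norm (p t) \<le> (norm (y t) + se * norm (z t)) / 2" "norm (m t) \<le> (norm (y t) + se * norm (z t)) / 2" for t
  proof -
    have n: "norm ((\<i> * complex_of_real se) *s cvec (z t)) = se * norm (z t)"
      using se0 by (simp add: norm_smult_c cvec_norm norm_mult)
    show "norm (p t) \<le> (norm (y t) + se * norm (z t)) / 2"
      unfolding p_def using norm_triangle_ineq4[of "cvec (y t)" "(\<i> * complex_of_real se) *s cvec (z t)"]
      by (simp add: n cvec_norm)
    show "norm (m t) \<le> (norm (y t) + se * norm (z t)) / 2"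
      unfolding m_def using norm_triangle_ineq[of "cvec (y t)" "(\<i> * complex_of_real se) *s cvec (z t)"]
      by (simp add: n cvec_norm)
  qed
  have Ksym: "\<forall>t\<in>{s..tf}. transpose (K t) = K t" using Kp by simp
  have normUp: "norm (Up t *v v) = norm v" if "t \<in> {s..tf}" for t v
    by (rule unitary_flow[OF HUp[folded K_def] Up0 _ Ksym that]) simp
  have normUm: "norm (Um t *v v) = norm v" if "t \<in> {s..tf}" for t v
    by (rule unitary_flow[OF HUm[folded K_def] Um0 _ Ksym that]) simp
  have Usurj: "\<exists>v. U *v v = w" if "\<And>v. norm (U *v v) = norm v" for U :: "complex^'e^'e" and w
  proof -
    have "inj (\<lambda>x. U *v x)"
    proof (rule injI)
      fix x x' assume "U *v x = U *v x'"
      then have "U *v (x - x') = 0" by (simp add: matrix_vector_mult_diff_distrib)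
      then have "norm (x - x') = 0" using that[of "x - x'"] by simp
      then show "x = x'" by simp
    qed
    then have "surj (\<lambda>x. U *v x)" by (intro linear_injective_imp_surjective) auto
    then show ?thesis by (metis surjD)
  qed
  define cp where "cp t = (SOME v. Up t *v v = p t)" for t
  define cm where "cm t = (SOME v. Um t *v v = m t)" for t
  have Ucp: "Up t *v cp t = p t" if "t \<in> {s..tf}" for t
    unfolding cp_def by (rule someI_ex[OF Usurj[OF normUp[OF that]]])
  have Ucm: "Um t *v cm t = m t" if "t \<in> {s..tf}" for t
    unfolding cm_def by (rule someI_ex[OF Usurj[OF normUm[OF that]]])
  have cbd: "(norm (y t) + se * norm (z t)) / 2 \<le> C' * X" if t: "t \<in> {s..tf}" for t
  proof -
    have "se * norm (z t) \<le> sC * (sG * (1 + sM) * X)"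
      using zbd[of t] Y1bd[OF t] sC0 by (meson mult_left_mono less_imp_le order_trans)
    then have "norm (y t) + se * norm (z t) \<le> sC * sG * (1 + sM) * X + sC * (sG * (1 + sM) * X)"
      using Ybd[OF t] by linarith
    then have "(norm (y t) + se * norm (z t)) / 2 \<le> (sC * sG * (1 + sM) * X + sC * (sG * (1 + sM) * X)) / 2"
      by (rule divide_right_mono) simp
    also have "\<dots> = sC * sG * (1 + sM) * X" by (simp add: algebra_simps)
    also have "\<dots> \<le> C' * X" using C'ge X0 by (rule mult_right_mono)
    finally show ?thesis .
  qed
  have XX: "X = norm \<eta>0 + sqrt e * norm \<xi>0" by (simp add: X_def b_def se_def a_def)
  have P1: "cvec (y t) = Up t *v cp t + Um t *v cm t \<and>
          cvec (y1 t) = (mat (\<i> / complex_of_real (sqrt e)) ** cmat (msqrt (A (rr t))))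
                           *v (Up t *v cp t - Um t *v cm t) \<and>
          norm (cp t) \<le> C' * (norm \<eta>0 + sqrt e * norm \<xi>0) \<and>
          norm (cm t) \<le> C' * (norm \<eta>0 + sqrt e * norm \<xi>0)" if t: "t \<in> {s..tf}" for t
  proof (intro conjI)
    show "cvec (y t) = Up t *v cp t + Um t *v cm t"
      by (simp only: Ucp[OF t] Ucm[OF t] p_def m_def half_sum)
    show "cvec (y1 t) = (mat (\<i> / complex_of_real (sqrt e)) ** cmat (msqrt (A (rr t)))) *v (Up t *v cp t - Um t *v cm t)"
    proof -
      have "Up t *v cp t - Um t *v cm t = (- (\<i> * complex_of_real se)) *s cvec (z t)"
        by (simp only: Ucp[OF t] Ucm[OF t] p_def m_def half_diff vector_sneg_minus1 vector_smult_assoc) simp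
      then have "(mat (\<i> / complex_of_real se) ** cmat (K t)) *v (Up t *v cp t - Um t *v cm t)
          = (\<i> / complex_of_real se) *s (cmat (K t) *v ((- (\<i> * complex_of_real se)) *s cvec (z t)))"
        by (simp only: mat_mult_apply)
      also have "\<dots> = ((\<i> / complex_of_real se) * (- (\<i> * complex_of_real se))) *s cvec (K t *v z t)"
        by (simp only: vector_scalar_commute vector_smult_assoc cmat_cvec)
      also have "(\<i> / complex_of_real se) * (- (\<i> * complex_of_real se)) = 1" using se0 by (simp add: field_simps)
      finally show ?thesis using Kz[of t] by (simp add: K_def se_def)
    qed
    show "norm (cp t) \<le> C' * (norm \<eta>0 + sqrt e * norm \<xi>0)"
      using pm_bd(1)[of t] cbd[OF t] normUp[OF t, of "cp t"] Ucp[OF t] XX by simp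
    show "norm (cm t) \<le> C' * (norm \<eta>0 + sqrt e * norm \<xi>0)"
      using pm_bd(2)[of t] cbd[OF t] normUm[OF t, of "cm t"] Ucm[OF t] XX by simp
  qed
  have P2: "norm (y t) \<le> C' * (norm \<eta>0 + sqrt e * norm \<xi>0) \<and>
          norm (y1 t) \<le> C' * (norm \<eta>0 / sqrt e + norm \<xi>0)" if t: "t \<in> {s..tf}" for t
  proof
    show "norm (y t) \<le> C' * (norm \<eta>0 + sqrt e * norm \<xi>0)"
      using Ybd[OF t] C'ge X0 XX by (meson mult_right_mono order_trans)
    have "norm (y1 t) \<le> sG * (1 + sM) * (X / se)"
      using Y1bd[OF t] se0 by (simp add: field_simps)
    also have "\<dots> \<le> C' * (X / se)" using C'ge2 X0 se0 by (intro mult_right_mono) auto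
    also have "X / se = norm \<eta>0 / sqrt e + norm \<xi>0" using se0 by (simp add: X_def b_def a_def se_def field_simps)
    finally show "norm (y1 t) \<le> C' * (norm \<eta>0 / sqrt e + norm \<xi>0)" .
  qed
  show ?thesis using P1 P2 by blast
qed



theorem lemma3p1:
  fixes A :: "real^'d \<Rightarrow> real^'e^'e"
    and r r1 r2 :: "real \<Rightarrow> real \<Rightarrow> real^'d"
    and tf C :: real
  assumes tf: "tf > 0"
    and C: "C > 0"
    and A_C3: "C3_on UNIV A"
    and A_spd: "\<forall>q. sym_posdef (A q)"
    and A_lower: "\<forall>q x. x \<bullet> (A q *v x) \<ge> (1 / C) * (x \<bullet> x)"
    and r_C3: "\<forall>\<epsilon>>0. C3_on {0..tf} (r \<epsilon>)"
    and r_d1: "\<forall>\<epsilon>>0. \<forall>t\<in>{0..tf}. (r \<epsilon> has_vector_derivative r1 \<epsilon> t) (at t within {0..tf})"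
    and r_d2: "\<forall>\<epsilon>>0. \<forall>t\<in>{0..tf}. (r1 \<epsilon> has_vector_derivative r2 \<epsilon> t) (at t within {0..tf})"
    and r_bd: "\<forall>\<epsilon>>0. \<forall>t\<in>{0..tf}. norm (r \<epsilon> t) \<le> C \<and> norm (r1 \<epsilon> t) \<le> C \<and> norm (r2 \<epsilon> t) \<le> C"
  shows "\<exists>C'. \<forall>\<epsilon>>0. \<forall>s\<in>{0..tf}. \<forall>(\<eta>0::real^'e) (\<xi>0::real^'e) y y1
           (Up :: real \<Rightarrow> complex^'e^'e) (Um :: real \<Rightarrow> complex^'e^'e).
      (\<forall>t\<in>{s..tf}. (y has_vector_derivative y1 t) (at t within {s..tf}) \<and>
          (y1 has_vector_derivative (- (1 / \<epsilon>) *\<^sub>R (A (r \<epsilon> t) *v y t))) (at t within {s..tf})) \<and>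
      y s = \<eta>0 \<and> y1 s = \<xi>0 \<and>
      (\<forall>t\<in>{s..tf}. (Up has_vector_derivative
          (mat (\<i> / complex_of_real (sqrt \<epsilon>)) ** cmat (msqrt (A (r \<epsilon> t))) ** Up t)) (at t within {s..tf})) \<and>
      Up s = mat 1 \<and>
      (\<forall>t\<in>{s..tf}. (Um has_vector_derivative
          (mat (- \<i> / complex_of_real (sqrt \<epsilon>)) ** cmat (msqrt (A (r \<epsilon> t))) ** Um t)) (at t within {s..tf})) \<and>
      Um s = mat 1
      \<longrightarrow>
      (\<exists>cp cm :: real \<Rightarrow> complex^'e. \<forall>t\<in>{s..tf}.
          cvec (y t) = Up t *v cp t + Um t *v cm t \<and>
          cvec (y1 t) = (mat (\<i> / complex_of_real (sqrt \<epsilon>)) ** cmat (msqrt (A (r \<epsilon> t))))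
                           *v (Up t *v cp t - Um t *v cm t) \<and>
          norm (cp t) \<le> C' * (norm \<eta>0 + sqrt \<epsilon> * norm \<xi>0) \<and>
          norm (cm t) \<le> C' * (norm \<eta>0 + sqrt \<epsilon> * norm \<xi>0)) \<and>
      (\<forall>t\<in>{s..tf}.
          norm (y t) \<le> C' * (norm \<eta>0 + sqrt \<epsilon> * norm \<xi>0) \<and>
          norm (y1 t) \<le> C' * (norm \<eta>0 / sqrt \<epsilon> + norm \<xi>0))"
proof -
  obtain f1 :: "real^'d \<Rightarrow> ((real^'d) \<Rightarrow>\<^sub>L (real^'e^'e))" and f2 where
      dA: "\<forall>q. (A has_derivative blinfun_apply (f1 q)) (at q)"
    and df1: "\<forall>q. (f1 has_derivative blinfun_apply (f2 q)) (at q)"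
    using A_C3 unfolding C3_on_def by blast
  have cA: "continuous_on UNIV A"
    by (rule has_derivative_continuous_on) (use dA in blast)
  have cf1: "continuous_on UNIV f1"
    by (rule has_derivative_continuous_on) (use df1 in blast)
  have "bounded (A ` cball 0 C)"
    by (intro compact_imp_bounded compact_continuous_image continuous_on_subset[OF cA] compact_cball) simp
  then obtain NA where NA: "NA > 0" "\<forall>q\<in>cball 0 C. norm (A q) \<le> NA"
    unfolding bounded_pos by auto
  have "bounded (f1 ` cball 0 C)"
    by (intro compact_imp_bounded compact_continuous_image continuous_on_subset[OF cf1] compact_cball) simp
  then obtain N1 where N1: "N1 > 0" "\<forall>q\<in>cball 0 C. norm (f1 q) \<le> N1"
    unfolding bounded_pos by auto
  define C' where "C' = (1 + sqrt C)^2 * sqrt (exp (real CARD('e) * real CARD('e) * N1 * C * C * tf))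
                     * (1 + sqrt (real CARD('e) * real CARD('e) * NA))"
  show ?thesis
    apply (intro exI[of _ C'] allI impI ballI)
    subgoal for \<epsilon> s \<eta>0 \<xi>0 y y1 Up Um
      apply (elim conjE)
      apply (rule core[where ?f1.0=f1 and NA=NA and ?N1.0=N1 and C'=C' and rr="r \<epsilon>" and ?rr1.0="r1 \<epsilon>"])
                        apply (use C A_spd A_lower dA NA N1 r_d1 in \<open>simp_all add: less_imp_le\<close>)
      using r_bd apply blast
      apply (rule C'_def)
      done
    done
qed

end
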